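(* Let $X$ be a Peano continuum and $f:X\to X$ a cw-expansive homeomorphism. Then the set $\mathcal S$ of sinks of $f$ is open in $X$, and every point of $\mathcal S\cap\Omega(f)$ is periodic.
   Context: A Peano continuum is a compact, connected, locally connected metric space $(X,d)$ with more than one point. A homeomorphism $f:X\to X$ of a compact metric space is continuum-wise expansive (cw-expansive) if there is $\alpha>0$ such that $\sup_{n\in\mathbb Z}\operatorname{diam} f^n(C)>\alpha$ for every continuum $C\subset X$ containing more than one point. For $\varepsilon>0$ and $x\in X$: $W^s_\varepsilon(x)=\{y\in X:\ d(f^n(x),f^n(y))\le\varepsilon \text{ for all } n\ge 0\}$ and $W^s(x)=\{y\in X:\ d(f^n(x),f^n(y))\to 0 \text{ as } n\to\infty\}$. A point $x$ is a weak sink if $W^s_\varepsilon(x)$ is a neighborhood of $x$ for every $\varepsilon>0$; $x$ is a sink if it is a weak sink and there exists $\varepsilon>0$ with $W^s_\varepsilon(x)\subset W^s(x)$. $\Omega(f)$ is the non-wandering set: $x\in\Omega(f)$ iff for every neighborhood $U$ of $x$ there is $n\ge1$ with $f^n(U)\cap U\neq\emptyset$. *)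

theory Defs
  imports "HOL-Analysis.Analysis"
begin

definition peano_continuum :: "'a::metric_space set \<Rightarrow> bool" where
  "peano_continuum X \<longleftrightarrow> compact X \<and> connected X \<and> locally connected X
     \<and> (\<exists>x\<in>X. \<exists>y\<in>X. x \<noteq> y)"

definition continuum :: "'a::metric_space set \<Rightarrow> bool" where
  "continuum C \<longleftrightarrow> compact C \<and> connected C \<and> C \<noteq> {}"

definition zit :: "'a set \<Rightarrow> ('a \<Rightarrow> 'a) \<Rightarrow> int \<Rightarrow> 'a \<Rightarrow> 'a" where
  "zit X f n = (if 0 \<le> n then f ^^ nat n else inv_into X f ^^ nat (- n))"

definition cw_expansive :: "'a::metric_space set \<Rightarrow> ('a \<Rightarrow> 'a) \<Rightarrow> bool" where
  "cw_expansive X f \<longleftrightarrow> (\<exists>\<alpha>>0. \<forall>C. C \<subseteq> X \<and> continuum C \<and> (\<exists>x\<in>C. \<exists>y\<in>C. x \<noteq> y)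
      \<longrightarrow> (SUP n::int. diameter (zit X f n ` C)) > \<alpha>)"

definition local_stable :: "'a::metric_space set \<Rightarrow> ('a \<Rightarrow> 'a) \<Rightarrow> real \<Rightarrow> 'a \<Rightarrow> 'a set" where
  "local_stable X f \<epsilon> x = {y \<in> X. \<forall>n::nat. dist ((f ^^ n) x) ((f ^^ n) y) \<le> \<epsilon>}"

definition stable_set :: "'a::metric_space set \<Rightarrow> ('a \<Rightarrow> 'a) \<Rightarrow> 'a \<Rightarrow> 'a set" where
  "stable_set X f x = {y \<in> X. (\<lambda>n. dist ((f ^^ n) x) ((f ^^ n) y)) \<longlonglongrightarrow> 0}"

definition weak_sink :: "'a::metric_space set \<Rightarrow> ('a \<Rightarrow> 'a) \<Rightarrow> 'a \<Rightarrow> bool" where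
  "weak_sink X f x \<longleftrightarrow> x \<in> X \<and> (\<forall>\<epsilon>>0. \<exists>U. openin (top_of_set X) U \<and> x \<in> U \<and> U \<subseteq> local_stable X f \<epsilon> x)"

definition sink :: "'a::metric_space set \<Rightarrow> ('a \<Rightarrow> 'a) \<Rightarrow> 'a \<Rightarrow> bool" where
  "sink X f x \<longleftrightarrow> weak_sink X f x \<and> (\<exists>\<epsilon>>0. local_stable X f \<epsilon> x \<subseteq> stable_set X f x)"

definition nonwandering :: "'a::metric_space set \<Rightarrow> ('a \<Rightarrow> 'a) \<Rightarrow> 'a set" where
  "nonwandering X f = {x \<in> X. \<forall>U. openin (top_of_set X) U \<and> x \<in> U \<longrightarrow>
      (\<exists>n\<ge>1. (f ^^ n) ` U \<inter> U \<noteq> {})}"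

definition periodic_point :: "('a \<Rightarrow> 'a) \<Rightarrow> 'a \<Rightarrow> bool" where
  "periodic_point f x \<longleftrightarrow> (\<exists>n\<ge>1. (f ^^ n) x = x)"

end

theory Submission
  imports Defs
begin

lemma hom_funpow:
  assumes "homeomorphism X X f g"
  shows "continuous_on X (f ^^ n) \<and> (f ^^ n) ` X \<subseteq> X"
proof (induction n)
  case 0 then show ?case by auto
next
  case (Suc n)
  have cf: "continuous_on X f" and fX: "f ` X \<subseteq> X"
    using assms by (auto simp: homeomorphism_def)
  have "continuous_on X (f \<circ> (f ^^ n))"
    using Suc continuous_on_compose continuous_on_subset[OF cf] by blast
  moreover have "(f \<circ> (f ^^ n)) ` X \<subseteq> X" using Suc fX by auto
  ultimately show ?case by simp
qed

lemma hom_funpow_g: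
  assumes "homeomorphism X X f g"
  shows "continuous_on X (g ^^ n) \<and> (g ^^ n) ` X \<subseteq> X"
  using hom_funpow[OF homeomorphism_symD[OF assms]] .

lemma inv_into_eq_g:
  assumes "homeomorphism X X f g" "y \<in> X"
  shows "inv_into X f y = g y"
proof -
  have "g y \<in> X" "f (g y) = y" using assms by (auto simp: homeomorphism_def)
  moreover have "inj_on f X" using assms
    by (metis homeomorphism_apply1 inj_on_inverseI)
  ultimately show ?thesis by (metis inv_into_f_f)
qed

lemma inv_funpow_eq_g:
  assumes "homeomorphism X X f g" "y \<in> X"
  shows "(inv_into X f ^^ k) y = (g ^^ k) y"
proof (induction k)
  case 0 then show ?case by simp
next
  case (Suc k)
  have "(g ^^ k) y \<in> X" using hom_funpow_g[OF assms(1)] assms(2) by blast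
  then show ?case using Suc inv_into_eq_g[OF assms(1)] by simp
qed

lemma zit_cont:
  assumes "homeomorphism X X f g"
  shows "continuous_on X (zit X f j) \<and> zit X f j ` X \<subseteq> X"
proof (cases "0 \<le> j")
  case True
  then have "zit X f j = f ^^ nat j" by (simp add: zit_def)
  then show ?thesis using hom_funpow[OF assms, of "nat j"] by simp
next
  case False
  have eq: "zit X f j y = (g ^^ nat (-j)) y" if "y \<in> X" for y
  proof -
    have "zit X f j y = (inv_into X f ^^ nat (-j)) y" using False by (simp add: zit_def)
    also have "\<dots> = (g ^^ nat (-j)) y" using inv_funpow_eq_g[OF assms that] .
    finally show ?thesis .
  qed
  have h: "continuous_on X (g ^^ nat (-j))" "(g ^^ nat (-j)) ` X \<subseteq> X"
    using hom_funpow_g[OF assms] by auto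
  have "continuous_on X (zit X f j)"
    using h(1) continuous_on_eq eq by metis
  moreover have "zit X f j ` X \<subseteq> X" using eq h(2) by auto
  ultimately show ?thesis by blast
qed

lemma inv_funpow_cancel:
  assumes "homeomorphism X X f g" "w \<in> X" "k \<le> m"
  shows "(inv_into X f ^^ k) ((f ^^ m) w) = (f ^^ (m - k)) w"
  using assms(3)
proof (induction k)
  case 0 then show ?case by simp
next
  case (Suc k)
  define u where "u = (f ^^ (m - Suc k)) w"
  have uX: "u \<in> X" unfolding u_def using hom_funpow[OF assms(1)] assms(2) by blast
  have fuX: "f u \<in> X" using uX assms(1) by (auto simp: homeomorphism_def)
  have mk: "m - k = Suc (m - Suc k)" using Suc.prems by linarith
  have e1: "(f ^^ (m - k)) w = f u" unfolding u_def by (simp only: mk funpow.simps comp_apply)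
  have "(inv_into X f ^^ Suc k) ((f ^^ m) w) = inv_into X f ((inv_into X f ^^ k) ((f ^^ m) w))"
    by (simp only: funpow.simps comp_apply)
  also have "\<dots> = inv_into X f (f u)" using Suc.IH[OF Suc_leD[OF Suc.prems]] e1 by (simp only:)
  also have "\<dots> = g (f u)" using inv_into_eq_g[OF assms(1) fuX] .
  also have "\<dots> = u" using homeomorphism_apply1[OF assms(1) uX] .
  finally show ?case unfolding u_def .
qed

lemma zit_funpow:
  assumes "homeomorphism X X f g" "w \<in> X" "0 \<le> int m + j"
  shows "zit X f j ((f ^^ m) w) = (f ^^ nat (int m + j)) w"
proof (cases "0 \<le> j")
  case True
  then have "zit X f j ((f ^^ m) w) = (f ^^ nat j) ((f ^^ m) w)" by (simp add: zit_def)
  also have "\<dots> = (f ^^ (nat j + m)) w" by (simp only: funpow_add comp_apply)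
  also have "nat j + m = nat (int m + j)" using True by linarith
  finally show ?thesis by simp
next
  case False
  then have "nat (-j) \<le> m" using assms(3) by linarith
  moreover have "nat (int m + j) = m - nat (-j)" using False assms(3) by linarith
  ultimately show ?thesis using False inv_funpow_cancel[OF assms(1,2)]
    by (simp add: zit_def)
qed

lemma finite_min_pos:
  fixes P :: "nat \<Rightarrow> real \<Rightarrow> bool"
  assumes "\<forall>m<N. \<exists>r>0. P m r"
    and "\<And>m r r'. P m r \<Longrightarrow> 0 < r' \<Longrightarrow> r' \<le> r \<Longrightarrow> P m r'"
  shows "\<exists>r>0. \<forall>m<N. P m r"
  using assms(1)
proof (induction N)
  case 0 then show ?case using zero_less_one by blast
next
  case (Suc N)
  then obtain r where r: "r > 0" "\<forall>m<N. P m r" by auto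
  obtain r' where r': "r' > 0" "P N r'" using Suc.prems by auto
  have "\<forall>m<Suc N. P m (min r r')"
    using r r' assms(2) by (auto simp: less_Suc_eq)
  then show ?case using r r' by (metis min_less_iff_conj)
qed

lemma sep_closed:
  fixes P Q :: "'a::metric_space set"
  assumes "closed P" "closed Q" "P \<noteq> {}" "Q \<noteq> {}" "P \<inter> Q = {}"
  obtains U V where "open U" "open V" "P \<subseteq> U" "Q \<subseteq> V" "U \<inter> V = {}"
proof -
  define U where "U = {z. infdist z P < infdist z Q}"
  define V where "V = {z. infdist z Q < infdist z P}"
  have oU: "open U" unfolding U_def
    by (rule open_Collect_less) (intro continuous_intros)+
  have oV: "open V" unfolding V_def
    by (rule open_Collect_less) (intro continuous_intros)+
  have PU: "P \<subseteq> U"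
  proof
    fix z assume z: "z \<in> P"
    have "infdist z P = 0" using in_closed_iff_infdist_zero[OF assms(1,3)] z by blast
    moreover have "z \<notin> Q" using z assms(5) by blast
    then have "infdist z Q \<noteq> 0" using in_closed_iff_infdist_zero[OF assms(2,4)] by blast
    moreover have "infdist z Q \<ge> 0" by (rule infdist_nonneg)
    ultimately show "z \<in> U" unfolding U_def by simp
  qed
  have QV: "Q \<subseteq> V"
  proof
    fix z assume z: "z \<in> Q"
    have "infdist z Q = 0" using in_closed_iff_infdist_zero[OF assms(2,4)] z by blast
    moreover have "z \<notin> P" using z assms(5) by blast
    then have "infdist z P \<noteq> 0" using in_closed_iff_infdist_zero[OF assms(1,3)] by blast
    moreover have "infdist z P \<ge> 0" by (rule infdist_nonneg)
    ultimately show "z \<in> V" unfolding V_def by simp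
  qed
  have "U \<inter> V = {}" unfolding U_def V_def by auto
  then show ?thesis using that oU oV PU QV by blast
qed

lemma uc_nbhd:
  fixes X :: "'a::metric_space set"
  assumes cX: "compact X" and lc: "locally connected X" and hom: "homeomorphism X X f g"
    and cw: "cw_expansive X f" and ws: "weak_sink X f x"
  shows "\<exists>V. openin (top_of_set X) V \<and> x \<in> V \<and>
    (\<forall>\<delta>>0. \<exists>N. \<forall>m\<ge>N. \<forall>y\<in>V. \<forall>z\<in>V. dist ((f ^^ m) y) ((f ^^ m) z) \<le> \<delta>)"
proof -
  obtain \<alpha> where \<alpha>: "\<alpha> > 0" and cw\<alpha>: "\<forall>C. C \<subseteq> X \<and> continuum C \<and> (\<exists>x\<in>C. \<exists>y\<in>C. x \<noteq> y)
      \<longrightarrow> (SUP n::int. diameter (zit X f n ` C)) > \<alpha>"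
    using cw unfolding cw_expansive_def by meson
  define \<epsilon> where "\<epsilon> = \<alpha> / 4"
  have \<epsilon>: "\<epsilon> > 0" using \<alpha> unfolding \<epsilon>_def by simp
  obtain U where U: "openin (top_of_set X) U" "x \<in> U" "U \<subseteq> local_stable X f \<epsilon> x"
    using ws \<epsilon> unfolding weak_sink_def by blast
  obtain V where V: "openin (top_of_set X) V" "connected V" "x \<in> V" "V \<subseteq> U"
    using lc U(1,2) unfolding locally_connected by meson
  have VX: "V \<subseteq> X" using openin_imp_subset V(1) .
  have xX: "x \<in> X" using VX V(3) by blast
  have Vst: "\<And>w n. w \<in> V \<Longrightarrow> dist ((f ^^ n) x) ((f ^^ n) w) \<le> \<epsilon>"
    using V(4) U(3) unfolding local_stable_def by blast
  have fX: "\<And>n w. w \<in> X \<Longrightarrow> (f ^^ n) w \<in> X" using hom_funpow[OF hom] by blast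
  have closedX: "closed X" using cX compact_imp_closed by blast
  show ?thesis
  proof (rule exI[of _ V], intro conjI V(1) V(3), rule ccontr)
    assume "\<not> (\<forall>\<delta>>0. \<exists>N. \<forall>m\<ge>N. \<forall>y\<in>V. \<forall>z\<in>V. dist ((f ^^ m) y) ((f ^^ m) z) \<le> \<delta>)"
    then obtain \<delta> where \<delta>: "\<delta> > 0" "\<forall>N. \<exists>m\<ge>N. \<exists>y\<in>V. \<exists>z\<in>V. dist ((f ^^ m) y) ((f ^^ m) z) > \<delta>"
      by (auto simp: not_le)
    then obtain m' y' z' where mb: "\<And>k. m' k \<ge> k \<and> y' k \<in> V \<and> z' k \<in> V \<and>
        dist ((f ^^ m' k) (y' k)) ((f ^^ m' k) (z' k)) > \<delta>"
      by metis
    have sX: "seq_compact X" using compact_imp_seq_compact cX .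
    have hX0: "\<forall>k. (f ^^ m' k) x \<in> X" using fX xX by blast
    then obtain p0 r0 where p0: "p0 \<in> X" "strict_mono r0" "((\<lambda>k. (f ^^ m' k) x) \<circ> r0) \<longlonglongrightarrow> p0"
      using seq_compactE[OF sX hX0] by blast
    define m where "m k = m' (r0 k)" for k
    define y where "y k = y' (r0 k)" for k
    define z where "z k = z' (r0 k)" for k
    have mk: "\<And>k. k \<le> m k" unfolding m_def using seq_suble[OF p0(2)] mb le_trans by metis
    have yV: "\<And>k. y k \<in> V" and zV: "\<And>k. z k \<in> V" unfolding y_def z_def using mb by auto
    have dyz: "\<And>k. dist ((f ^^ m k) (y k)) ((f ^^ m k) (z k)) > \<delta>"
      unfolding m_def y_def z_def using mb by auto
    have p0lim: "(\<lambda>k. (f ^^ m k) x) \<longlonglongrightarrow> p0" using p0(3) unfolding m_def comp_def by simp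
    define A where "A k = (f ^^ m k) ` V" for k
    define L where "L = (\<Inter>N. closure (\<Union>k\<in>{N..}. A k))"
    have memL: "p \<in> L \<longleftrightarrow> (\<forall>N. \<forall>e>0. \<exists>k\<ge>N. \<exists>w\<in>V. dist ((f ^^ m k) w) p < e)" for p
      unfolding L_def A_def by (simp add: closure_approachable, fast)
    have AX: "\<And>k. A k \<subseteq> X" unfolding A_def using fX VX by auto
    have LX: "L \<subseteq> X"
    proof -
      have "L \<subseteq> closure (\<Union>k\<in>{0..}. A k)" unfolding L_def by blast
      also have "\<dots> \<subseteq> X" using AX closedX by (simp add: UN_least closure_minimal)
      finally show ?thesis .
    qed
    have Lcl: "closed L" unfolding L_def by (intro closed_INT ballI closed_closure)
    have Lc: "compact L"
    proof -
      have "compact (L \<inter> X)" using closed_Int_compact[OF Lcl cX] .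
      moreover have "L \<inter> X = L" using LX by blast
      ultimately show ?thesis by simp
    qed
    have limL: "c \<in> L" if gk: "\<And>k. k \<le> gg k" and sA: "\<And>k. s k \<in> A (gg k)" and sc: "s \<longlonglongrightarrow> c"
      for gg s c
      unfolding memL
    proof (intro allI impI)
      fix N and e :: real assume e: "e > 0"
      obtain K where K: "\<forall>k\<ge>K. dist (s k) c < e" using sc e unfolding lim_sequentially by blast
      define k0 where "k0 = max N K"
      obtain w where w: "w \<in> V" "s k0 = (f ^^ m (gg k0)) w" using sA[of k0] unfolding A_def by blast
      have "gg k0 \<ge> N" using gk[of k0] unfolding k0_def by linarith
      moreover have "dist ((f ^^ m (gg k0)) w) c < e" using K[rule_format, of k0] w(2) unfolding k0_def by simp
      ultimately show "\<exists>k\<ge>N. \<exists>w\<in>V. dist ((f ^^ m k) w) c < e" using w(1) by blast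
    qed
    have p0L: "p0 \<in> L"
      by (rule limL[of id "\<lambda>k. (f ^^ m k) x"]) (use V(3) p0lim in \<open>auto simp: A_def\<close>)
    have hX1: "\<forall>k. (f ^^ m k) (y k) \<in> X" using fX yV VX by blast
    then obtain a r1 where a: "a \<in> X" "strict_mono r1" "((\<lambda>k. (f ^^ m k) (y k)) \<circ> r1) \<longlonglongrightarrow> a"
      using seq_compactE[OF sX hX1] by blast
    have hX2: "\<forall>k. (f ^^ m (r1 k)) (z (r1 k)) \<in> X" using fX zV VX by blast
    then obtain b r2 where b: "b \<in> X" "strict_mono r2"
        "((\<lambda>k. (f ^^ m (r1 k)) (z (r1 k))) \<circ> r2) \<longlonglongrightarrow> b"
      using seq_compactE[OF sX hX2] by blast
    define gg where "gg = r1 \<circ> r2"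
    have ggk: "\<And>k. k \<le> gg k" unfolding gg_def using seq_suble[OF a(2)] seq_suble[OF b(2)]
      by (metis comp_apply le_trans)
    have alim: "(\<lambda>k. (f ^^ m (gg k)) (y (gg k))) \<longlonglongrightarrow> a"
      using LIMSEQ_subseq_LIMSEQ[OF a(3) b(2)] unfolding gg_def comp_def by simp
    have blim: "(\<lambda>k. (f ^^ m (gg k)) (z (gg k))) \<longlonglongrightarrow> b"
      using b(3) unfolding gg_def comp_def by simp
    have aL: "a \<in> L" by (rule limL[OF ggk _ alim]) (auto simp: A_def yV)
    have bL: "b \<in> L" by (rule limL[OF ggk _ blim]) (auto simp: A_def zV)
    have "\<delta> \<le> dist a b"
    proof (rule LIMSEQ_le_const)
      show "(\<lambda>k. dist ((f ^^ m (gg k)) (y (gg k))) ((f ^^ m (gg k)) (z (gg k)))) \<longlonglongrightarrow> dist a b"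
        using tendsto_dist[OF alim blim] .
      show "\<exists>N. \<forall>n\<ge>N. \<delta> \<le> dist ((f ^^ m (gg n)) (y (gg n))) ((f ^^ m (gg n)) (z (gg n)))"
        using dyz less_imp_le by blast
    qed
    then have ab: "a \<noteq> b" using \<delta>(1) by auto
    have conA: "connected (A k)" for k
      unfolding A_def
      by (rule connected_continuous_image[OF continuous_on_subset[OF _ VX] V(2)])
         (use hom_funpow[OF hom] in blast)
    have key: False if PQ: "closed P" "closed Q" "P \<noteq> {}" "Q \<noteq> {}" "P \<union> Q = L" "P \<inter> Q = {}"
      "p0 \<in> P" for P Q
    proof -
      obtain U1 V1 where UV: "open U1" "open V1" "P \<subseteq> U1" "Q \<subseteq> V1" "U1 \<inter> V1 = {}"
        using sep_closed[OF PQ(1-4,6)] by blast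
      obtain q where q: "q \<in> Q" using PQ(4) by blast
      have qL: "q \<in> L" using q PQ(5) by blast
      obtain e0 where e0: "e0 > 0" "ball p0 e0 \<subseteq> U1"
        using UV(1,3) PQ(7) open_contains_ball by blast
      obtain e1 where e1: "e1 > 0" "ball q e1 \<subseteq> V1"
        using UV(2,4) q open_contains_ball by blast
      obtain K0 where K0: "\<forall>k\<ge>K0. dist ((f ^^ m k) x) p0 < e0"
        using p0lim e0(1) unfolding lim_sequentially by blast
      have "\<exists>k\<ge>N. \<exists>u\<in>A k. u \<notin> U1 \<union> V1" for N
      proof -
        obtain k w where kw: "k \<ge> max N K0" "w \<in> V" "dist ((f ^^ m k) w) q < e1"
          using qL e1(1) unfolding memL by blast
        have inV1: "(f ^^ m k) w \<in> V1" using kw(3) e1(2) by (auto simp: dist_commute)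
        have inU1: "(f ^^ m k) x \<in> U1" using K0 kw(1) e0(2) by (auto simp: dist_commute)
        have "V1 \<inter> A k \<noteq> {}" using inV1 kw(2) unfolding A_def by blast
        moreover have "U1 \<inter> A k \<noteq> {}" using inU1 V(3) unfolding A_def by blast
        ultimately have "\<not> A k \<subseteq> U1 \<union> V1"
          using connectedD[OF conA UV(1,2)] UV(5) by blast
        then show ?thesis using kw(1) by auto
      qed
      then obtain gg2 s where gs: "\<And>N. gg2 N \<ge> N \<and> s N \<in> A (gg2 N) \<and> s N \<notin> U1 \<union> V1"
        by metis
      have "\<forall>N. s N \<in> X - (U1 \<union> V1)" using gs AX by blast
      moreover have "seq_compact (X - (U1 \<union> V1))"
        using compact_imp_seq_compact compact_diff[OF cX open_Un[OF UV(1,2)]] by blast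
      ultimately obtain c r3 where c: "c \<in> X - (U1 \<union> V1)" "strict_mono r3" "(s \<circ> r3) \<longlonglongrightarrow> c"
        using seq_compactE by metis
      have "c \<in> L"
      proof (rule limL[of "gg2 \<circ> r3" "s \<circ> r3"])
        show "k \<le> (gg2 \<circ> r3) k" for k using seq_suble[OF c(2), of k] gs[of "r3 k"] by simp
        show "(s \<circ> r3) k \<in> A ((gg2 \<circ> r3) k)" for k using gs by simp
        show "(s \<circ> r3) \<longlonglongrightarrow> c" using c(3) .
      qed
      then show False using c(1) PQ(5) UV(3,4) by blast
    qed
    have conL: "connected L"
      unfolding connected_closed_set[OF Lcl]
    proof (rule notI, elim exE conjE)
      fix P Q assume PQ: "closed P" "closed Q" "P \<noteq> {}" "Q \<noteq> {}" "P \<union> Q = L" "P \<inter> Q = {}"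
      show False
      proof (cases "p0 \<in> P")
        case True then show False using key[OF PQ] by blast
      next
        case False
        then have "p0 \<in> Q" using p0L PQ(5) by blast
        moreover have "Q \<union> P = L" "Q \<inter> P = {}" using PQ by blast+
        ultimately show False using key[of Q P] PQ by blast
      qed
    qed
    have contL: "continuum L" unfolding continuum_def using Lc conL aL by auto
    have big: "(SUP n::int. diameter (zit X f n ` L)) > \<alpha>"
    proof -
      have "L \<subseteq> X \<and> continuum L \<and> (\<exists>x\<in>L. \<exists>y\<in>L. x \<noteq> y)" using LX contL aL bL ab by blast
      then show ?thesis using cw\<alpha> by (elim allE impE)
    qed
    have pb: "dist (zit X f j p) (zit X f j p0) \<le> \<epsilon>" if pL: "p \<in> L" for j p
    proof (rule field_le_epsilon)
      fix e :: real assume e: "e > 0"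
      have "uniformly_continuous_on X (zit X f j)"
        using compact_uniformly_continuous zit_cont[OF hom] cX by blast
      then obtain \<rho> where \<rho>: "\<rho> > 0"
        "\<forall>u\<in>X. \<forall>v\<in>X. dist v u < \<rho> \<longrightarrow> dist (zit X f j v) (zit X f j u) < e / 2"
        unfolding uniformly_continuous_on_def using e by (meson half_gt_zero)
      obtain K1 where K1: "\<forall>k\<ge>K1. dist ((f ^^ m k) x) p0 < \<rho>"
        using p0lim \<rho>(1) unfolding lim_sequentially by blast
      obtain k w where kw: "k \<ge> max K1 (nat (-j))" "w \<in> V" "dist ((f ^^ m k) w) p < \<rho>"
        using pL \<rho>(1) unfolding memL by blast
      have wX: "w \<in> X" using kw(2) VX by blast
      have pX: "p \<in> X" using pL LX by blast
      have mkj: "0 \<le> int (m k) + j" using mk[of k] kw(1) by linarith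
      have e1: "zit X f j ((f ^^ m k) w) = (f ^^ nat (int (m k) + j)) w"
        using zit_funpow[OF hom wX mkj] .
      have e2: "zit X f j ((f ^^ m k) x) = (f ^^ nat (int (m k) + j)) x"
        using zit_funpow[OF hom xX mkj] .
      have d1: "dist (zit X f j ((f ^^ m k) w)) (zit X f j p) < e / 2"
        using \<rho>(2) pX fX[OF wX] kw(3) by blast
      have d2: "dist (zit X f j ((f ^^ m k) x)) (zit X f j p0) < e / 2"
        using \<rho>(2) p0(1) fX[OF xX] K1 kw(1) by auto
      have d3: "dist ((f ^^ nat (int (m k) + j)) w) ((f ^^ nat (int (m k) + j)) x) \<le> \<epsilon>"
        using Vst[OF kw(2)] by (simp add: dist_commute)
      define P where "P = zit X f j p"
      define W where "W = zit X f j ((f ^^ m k) w)"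
      define Z where "Z = zit X f j ((f ^^ m k) x)"
      define P0 where "P0 = zit X f j p0"
      have t1: "dist P P0 \<le> dist P W + dist W P0" by (rule dist_triangle)
      have t2: "dist W P0 \<le> dist W Z + dist Z P0" by (rule dist_triangle)
      have d1': "dist P W < e / 2" using d1 unfolding P_def W_def by (simp add: dist_commute)
      have d2': "dist Z P0 < e / 2" using d2 unfolding Z_def P0_def .
      have d3': "dist W Z \<le> \<epsilon>" using d3 unfolding W_def Z_def e1 e2 .
      have "dist P P0 \<le> \<epsilon> + e" using t1 t2 d1' d2' d3' by linarith
      then show "dist (zit X f j p) (zit X f j p0) \<le> \<epsilon> + e" unfolding P_def P0_def .
    qed
    have dbound: "diameter (zit X f j ` L) \<le> \<alpha> / 2" for j
    proof -
      have bnd: "dist u v \<le> \<alpha> / 2" if uv: "u \<in> zit X f j ` L" "v \<in> zit X f j ` L" for u v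
      proof -
        obtain p q where "p \<in> L" "q \<in> L" "u = zit X f j p" "v = zit X f j q" using uv by blast
        then have "dist u (zit X f j p0) \<le> \<epsilon>" "dist v (zit X f j p0) \<le> \<epsilon>" using pb by auto
        then have "dist u v \<le> 2 * \<epsilon>" using dist_triangle3[of u v "zit X f j p0"] dist_commute[of u "zit X f j p0"] dist_commute[of v "zit X f j p0"] by linarith
        then show ?thesis unfolding \<epsilon>_def by simp
      qed
      show ?thesis
      proof (cases "zit X f j ` L = {}")
        case True then show ?thesis using \<alpha> by (simp add: diameter_def)
      next
        case False
        have "(SUP xy\<in>(zit X f j ` L) \<times> (zit X f j ` L). (case xy of (u, v) \<Rightarrow> dist u v)) \<le> \<alpha> / 2"
        proof (rule cSUP_least)
          show "(zit X f j ` L) \<times> (zit X f j ` L) \<noteq> {}" using False by simp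
          show "(case xy of (u, v) \<Rightarrow> dist u v) \<le> \<alpha> / 2" if "xy \<in> (zit X f j ` L) \<times> (zit X f j ` L)" for xy
            using that bnd by (cases xy) simp
        qed
        then show ?thesis using False unfolding diameter_def by simp
      qed
    qed
    have "(SUP n::int. diameter (zit X f n ` L)) \<le> \<alpha> / 2"
      by (rule cSUP_least) (simp, rule dbound)
    then show False using big \<alpha> by linarith
  qed
qed

theorem mainTheorem6:
  fixes X :: "'a::metric_space set" and f g :: "'a \<Rightarrow> 'a"
  assumes "peano_continuum X"
    and "homeomorphism X X f g"
    and "cw_expansive X f"
  shows "openin (top_of_set X) {x \<in> X. sink X f x}
     \<and> (\<forall>x \<in> {x \<in> X. sink X f x} \<inter> nonwandering X f. periodic_point f x)"
proof -
  have cX: "compact X" and lc: "locally connected X"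
    using assms(1) unfolding peano_continuum_def by auto
  have fX: "\<And>n w. w \<in> X \<Longrightarrow> (f ^^ n) w \<in> X" using hom_funpow[OF assms(2)] by blast
  have contn: "\<And>n. continuous_on X (f ^^ n)" using hom_funpow[OF assms(2)] by blast
  have cpt: "\<exists>\<rho>>0. \<forall>z\<in>X. dist z y < \<rho> \<longrightarrow> dist ((f ^^ n) z) ((f ^^ n) y) < e"
    if "y \<in> X" "e > 0" for n y e
    using contn[of n] that unfolding continuous_on_iff by blast
  have ucx: "\<exists>V. openin (top_of_set X) V \<and> x \<in> V \<and>
    (\<forall>\<delta>>0. \<exists>N. \<forall>m\<ge>N. \<forall>y\<in>V. \<forall>z\<in>V. dist ((f ^^ m) y) ((f ^^ m) z) \<le> \<delta>)"
    if "sink X f x" for x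
    using uc_nbhd[OF cX lc assms(2,3)] that unfolding sink_def by blast
  have part1: "openin (top_of_set X) {x \<in> X. sink X f x}"
  proof (subst openin_subopen, intro ballI)
    fix x assume "x \<in> {x \<in> X. sink X f x}"
    then have xX: "x \<in> X" and sk: "sink X f x" by auto
    obtain \<epsilon>0 where \<epsilon>0: "\<epsilon>0 > 0" "local_stable X f \<epsilon>0 x \<subseteq> stable_set X f x"
      using sk unfolding sink_def by blast
    obtain U0 where U0: "openin (top_of_set X) U0" "x \<in> U0" "U0 \<subseteq> local_stable X f (\<epsilon>0 / 2) x"
      using sk \<epsilon>0(1) unfolding sink_def weak_sink_def by (meson half_gt_zero)
    obtain V where V: "openin (top_of_set X) V" "x \<in> V"
      "\<forall>\<delta>>0. \<exists>N. \<forall>m\<ge>N. \<forall>y\<in>V. \<forall>z\<in>V. dist ((f ^^ m) y) ((f ^^ m) z) \<le> \<delta>"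
      using ucx[OF sk] by blast
    define T where "T = U0 \<inter> V"
    have Topen: "openin (top_of_set X) T" unfolding T_def using U0(1) V(1) by (rule openin_Int)
    have TX: "T \<subseteq> X" using openin_imp_subset[OF Topen] .
    have "sink X f y" if yT: "y \<in> T" for y
    proof -
      have yX: "y \<in> X" using yT TX by blast
      have ws: "weak_sink X f y"
        unfolding weak_sink_def
      proof (intro conjI allI impI)
        show "y \<in> X" using yX .
        fix \<delta> :: real assume \<delta>: "\<delta> > 0"
        obtain N where N: "\<forall>m\<ge>N. \<forall>a\<in>V. \<forall>b\<in>V. dist ((f ^^ m) a) ((f ^^ m) b) \<le> \<delta>"
          using V(3) \<delta> by blast
        have "\<exists>\<rho>>0. \<forall>n<N. (\<lambda>n r. \<forall>z\<in>X. dist z y < r \<longrightarrow> dist ((f ^^ n) z) ((f ^^ n) y) < \<delta>) n \<rho>"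
        proof (rule finite_min_pos)
          show "\<forall>m<N. \<exists>r>0. (\<lambda>n r. \<forall>z\<in>X. dist z y < r \<longrightarrow> dist ((f ^^ n) z) ((f ^^ n) y) < \<delta>) m r"
            using cpt[OF yX \<delta>] by simp
          show "(\<lambda>n r. \<forall>z\<in>X. dist z y < r \<longrightarrow> dist ((f ^^ n) z) ((f ^^ n) y) < \<delta>) m r'"
            if "(\<lambda>n r. \<forall>z\<in>X. dist z y < r \<longrightarrow> dist ((f ^^ n) z) ((f ^^ n) y) < \<delta>) m r"
               "0 < r'" "r' \<le> r" for m r r'
            using that by force
        qed
        then obtain \<rho> where \<rho>: "\<rho> > 0"
          "\<forall>n<N. \<forall>z\<in>X. dist z y < \<rho> \<longrightarrow> dist ((f ^^ n) z) ((f ^^ n) y) < \<delta>"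
          by auto
        define W where "W = T \<inter> (X \<inter> ball y \<rho>)"
        have Wopen: "openin (top_of_set X) W" unfolding W_def
          using Topen openin_open_Int[OF open_ball] by (rule openin_Int)
        have yW: "y \<in> W" unfolding W_def using yT yX \<rho>(1) by simp
        have "W \<subseteq> local_stable X f \<delta> y"
        proof
          fix z assume zW: "z \<in> W"
          have zX: "z \<in> X" and zT: "z \<in> T" and zy: "dist z y < \<rho>"
            using zW unfolding W_def by (auto simp: dist_commute)
          have "dist ((f ^^ n) y) ((f ^^ n) z) \<le> \<delta>" for n
          proof (cases "n < N")
            case True
            then have "dist ((f ^^ n) z) ((f ^^ n) y) < \<delta>" using \<rho>(2) zX zy by blast
            then show ?thesis by (simp add: dist_commute)
          next
            case False
            have "y \<in> V" "z \<in> V" using yT zT unfolding T_def by auto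
            then show ?thesis using N False by auto
          qed
          then show "z \<in> local_stable X f \<delta> y" unfolding local_stable_def using zX by blast
        qed
        then show "\<exists>U. openin (top_of_set X) U \<and> y \<in> U \<and> U \<subseteq> local_stable X f \<delta> y"
          using Wopen yW by blast
      qed
      have hy: "dist ((f ^^ n) x) ((f ^^ n) y) \<le> \<epsilon>0 / 2" for n
        using yT U0(3) unfolding T_def local_stable_def by blast
      have "y \<in> local_stable X f \<epsilon>0 x"
        unfolding local_stable_def using yX hy \<epsilon>0(1)
        by (auto intro: order_trans[OF hy])
      then have ty: "(\<lambda>n. dist ((f ^^ n) x) ((f ^^ n) y)) \<longlonglongrightarrow> 0"
        using \<epsilon>0(2) unfolding stable_set_def by blast
      have "local_stable X f (\<epsilon>0 / 2) y \<subseteq> stable_set X f y"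
      proof
        fix z assume "z \<in> local_stable X f (\<epsilon>0 / 2) y"
        then have zX: "z \<in> X" and hz: "\<And>n. dist ((f ^^ n) y) ((f ^^ n) z) \<le> \<epsilon>0 / 2"
          unfolding local_stable_def by auto
        have "dist ((f ^^ n) x) ((f ^^ n) z) \<le> \<epsilon>0" for n
          using dist_triangle[of "(f ^^ n) x" "(f ^^ n) z" "(f ^^ n) y"] hy[of n] hz[of n] by linarith
        then have "z \<in> local_stable X f \<epsilon>0 x" unfolding local_stable_def using zX by blast
        then have tz: "(\<lambda>n. dist ((f ^^ n) x) ((f ^^ n) z)) \<longlonglongrightarrow> 0"
          using \<epsilon>0(2) unfolding stable_set_def by blast
        have sum0: "(\<lambda>n. dist ((f ^^ n) x) ((f ^^ n) y) + dist ((f ^^ n) x) ((f ^^ n) z)) \<longlonglongrightarrow> 0"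
          using tendsto_add_zero[OF ty tz] .
        have "(\<lambda>n. dist ((f ^^ n) y) ((f ^^ n) z)) \<longlonglongrightarrow> 0"
        proof (rule Lim_null_comparison[OF _ sum0])
          show "\<forall>\<^sub>F n in sequentially. norm (dist ((f ^^ n) y) ((f ^^ n) z))
              \<le> dist ((f ^^ n) x) ((f ^^ n) y) + dist ((f ^^ n) x) ((f ^^ n) z)"
            by (intro always_eventually allI) (simp add: dist_triangle3)
        qed
        then show "z \<in> stable_set X f y" unfolding stable_set_def using zX by blast
      qed
      then show "sink X f y" unfolding sink_def using ws \<epsilon>0(1) half_gt_zero by blast
    qed
    then have "T \<subseteq> {x \<in> X. sink X f x}" using TX by blast
    moreover have "x \<in> T" unfolding T_def using U0(2) V(2) by blast
    ultimately show "\<exists>T. openin (top_of_set X) T \<and> x \<in> T \<and> T \<subseteq> {x \<in> X. sink X f x}"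
      using Topen by blast
  qed
  have part2: "periodic_point f x" if xS: "x \<in> {x \<in> X. sink X f x} \<inter> nonwandering X f" for x
  proof (rule ccontr)
    assume np: "\<not> periodic_point f x"
    then have nper: "\<And>n. 1 \<le> n \<Longrightarrow> (f ^^ n) x \<noteq> x" unfolding periodic_point_def by blast
    have xX: "x \<in> X" and sk: "sink X f x" using xS by auto
    have nw: "\<And>U. openin (top_of_set X) U \<Longrightarrow> x \<in> U \<Longrightarrow> \<exists>n\<ge>1. (f ^^ n) ` U \<inter> U \<noteq> {}"
      using xS unfolding nonwandering_def by blast
    obtain V where V: "openin (top_of_set X) V" "x \<in> V"
      "\<forall>\<delta>>0. \<exists>N. \<forall>m\<ge>N. \<forall>y\<in>V. \<forall>z\<in>V. dist ((f ^^ m) y) ((f ^^ m) z) \<le> \<delta>"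
      using ucx[OF sk] by blast
    have VX: "V \<subseteq> X" using openin_imp_subset[OF V(1)] .
    have recur: "\<exists>m\<ge>N. dist ((f ^^ m) x) x < \<delta>" if \<delta>: "\<delta> > 0" for \<delta> N
    proof -
      obtain N1 where N1: "\<forall>m\<ge>N1. \<forall>a\<in>V. \<forall>b\<in>V. dist ((f ^^ m) a) ((f ^^ m) b) \<le> \<delta> / 2"
        using V(3) \<delta> half_gt_zero by blast
      define M where "M = max N N1"
      have "\<exists>\<eta>>0. \<forall>k<M. (\<lambda>k r. 1 \<le> k \<longrightarrow> r \<le> dist ((f ^^ k) x) x) k \<eta>"
      proof (rule finite_min_pos)
        show "\<forall>k<M. \<exists>r>0. (\<lambda>k r. 1 \<le> k \<longrightarrow> r \<le> dist ((f ^^ k) x) x) k r"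
        proof (intro allI impI)
          fix k assume "k < M"
          show "\<exists>r>0. (\<lambda>k r. 1 \<le> k \<longrightarrow> r \<le> dist ((f ^^ k) x) x) k r"
          proof (cases "1 \<le> k")
            case True
            then have "dist ((f ^^ k) x) x > 0" using nper by simp
            then show ?thesis using True by (intro exI[of _ "dist ((f ^^ k) x) x"]) auto
          next
            case False then show ?thesis by (intro exI[of _ 1]) auto
          qed
        qed
        show "(\<lambda>k r. 1 \<le> k \<longrightarrow> r \<le> dist ((f ^^ k) x) x) m r'"
          if "(\<lambda>k r. 1 \<le> k \<longrightarrow> r \<le> dist ((f ^^ k) x) x) m r" "0 < r'" "r' \<le> r" for m r r'
          using that by auto
      qed
      then obtain \<eta> where \<eta>: "\<eta> > 0" "\<forall>k<M. 1 \<le> k \<longrightarrow> \<eta> \<le> dist ((f ^^ k) x) x" by auto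
      have "\<exists>\<rho>>0. \<forall>n<M. (\<lambda>n r. \<forall>z\<in>X. dist z x < r \<longrightarrow> dist ((f ^^ n) z) ((f ^^ n) x) < \<eta> / 2) n \<rho>"
      proof (rule finite_min_pos)
        show "\<forall>m<M. \<exists>r>0. (\<lambda>n r. \<forall>z\<in>X. dist z x < r \<longrightarrow> dist ((f ^^ n) z) ((f ^^ n) x) < \<eta> / 2) m r"
          using cpt[OF xX half_gt_zero[OF \<eta>(1)]] by blast
        show "(\<lambda>n r. \<forall>z\<in>X. dist z x < r \<longrightarrow> dist ((f ^^ n) z) ((f ^^ n) x) < \<eta> / 2) m r'"
          if "(\<lambda>n r. \<forall>z\<in>X. dist z x < r \<longrightarrow> dist ((f ^^ n) z) ((f ^^ n) x) < \<eta> / 2) m r"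
             "0 < r'" "r' \<le> r" for m r r'
          using that by force
      qed
      then obtain \<rho> where \<rho>: "\<rho> > 0"
        "\<forall>n<M. \<forall>z\<in>X. dist z x < \<rho> \<longrightarrow> dist ((f ^^ n) z) ((f ^^ n) x) < \<eta> / 2"
        by auto
      define r where "r = min \<rho> (min (\<eta> / 2) (\<delta> / 2))"
      have r: "r > 0" "r \<le> \<rho>" "r \<le> \<eta> / 2" "r \<le> \<delta> / 2"
        unfolding r_def using \<rho>(1) \<eta>(1) \<delta> by auto
      define W where "W = V \<inter> (X \<inter> ball x r)"
      have Wopen: "openin (top_of_set X) W" unfolding W_def
        using V(1) openin_open_Int[OF open_ball] by (rule openin_Int)
      have xW: "x \<in> W" unfolding W_def using V(2) xX r(1) by simp
      obtain n where n: "n \<ge> 1" "(f ^^ n) ` W \<inter> W \<noteq> {}" using nw[OF Wopen xW] by blast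
      then obtain z where zW: "z \<in> W" "(f ^^ n) z \<in> W" by blast
      have zX: "z \<in> X" and zV: "z \<in> V" and zx: "dist z x < r"
        using zW(1) unfolding W_def by (auto simp: dist_commute)
      have fzx: "dist ((f ^^ n) z) x < r" using zW(2) unfolding W_def by (auto simp: dist_commute)
      have tri: "dist ((f ^^ n) x) x \<le> dist ((f ^^ n) x) ((f ^^ n) z) + dist ((f ^^ n) z) x"
        by (rule dist_triangle)
      have nM: "n \<ge> M"
      proof (rule ccontr)
        assume "\<not> n \<ge> M"
        then have nM': "n < M" by simp
        have "\<eta> \<le> dist ((f ^^ n) x) x" using \<eta>(2) nM' n(1) by blast
        moreover have "dist ((f ^^ n) z) ((f ^^ n) x) < \<eta> / 2" using \<rho>(2) nM' zX zx r(2) by force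
        ultimately show False using tri fzx r(3) by (simp add: dist_commute)
      qed
      then have "dist ((f ^^ n) x) ((f ^^ n) z) \<le> \<delta> / 2" using N1 V(2) zV unfolding M_def by auto
      then have "dist ((f ^^ n) x) x < \<delta>" using tri fzx r(4) by linarith
      moreover have "n \<ge> N" using nM unfolding M_def by simp
      ultimately show ?thesis by blast
    qed
    obtain r0 where r0: "r0 > 0" "ball x r0 \<inter> X \<subseteq> V"
      using V(1,2) unfolding openin_contains_ball by blast
    obtain a where a: "a \<ge> 1" "dist ((f ^^ a) x) x < r0" using recur[OF r0(1), of 1] by blast
    have faV: "(f ^^ a) x \<in> V" using a(2) r0(2) fX[OF xX] by (auto simp: dist_commute)
    have "dist ((f ^^ a) x) x \<le> 0"
    proof (rule field_le_epsilon)
      fix e :: real assume e: "e > 0"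
      define e3 where "e3 = e / 3"
      have e3: "e3 > 0" unfolding e3_def using e by simp
      obtain \<rho> where \<rho>: "\<rho> > 0" "\<forall>z\<in>X. dist z x < \<rho> \<longrightarrow> dist ((f ^^ a) z) ((f ^^ a) x) < e3"
        using cpt[OF xX e3] by blast
      obtain N2 where N2: "\<forall>m\<ge>N2. \<forall>p\<in>V. \<forall>q\<in>V. dist ((f ^^ m) p) ((f ^^ m) q) \<le> e3"
        using V(3) e3 by blast
      obtain m where m: "m \<ge> N2" "dist ((f ^^ m) x) x < min \<rho> e3"
        using recur[of "min \<rho> e3" N2] \<rho>(1) e3 by auto
      have c1: "(f ^^ a) ((f ^^ m) x) = (f ^^ (a + m)) x" by (simp add: funpow_add)
      have c2: "(f ^^ m) ((f ^^ a) x) = (f ^^ (m + a)) x" by (simp add: funpow_add)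
      have comm: "(f ^^ a) ((f ^^ m) x) = (f ^^ m) ((f ^^ a) x)" using c1 c2 by (simp add: add.commute)
      have d1: "dist ((f ^^ a) ((f ^^ m) x)) ((f ^^ a) x) < e3"
        using \<rho>(2) fX[OF xX, of m] m(2) by auto
      have d2: "dist ((f ^^ m) ((f ^^ a) x)) ((f ^^ m) x) \<le> e3"
        using N2 m(1) faV V(2) by blast
      have d3: "dist ((f ^^ m) x) x < e3" using m(2) by simp
      have t1: "dist ((f ^^ a) x) x \<le> dist ((f ^^ a) x) ((f ^^ a) ((f ^^ m) x)) + dist ((f ^^ a) ((f ^^ m) x)) x"
        by (rule dist_triangle)
      have t2: "dist ((f ^^ a) ((f ^^ m) x)) x \<le> dist ((f ^^ a) ((f ^^ m) x)) ((f ^^ m) x) + dist ((f ^^ m) x) x"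
        by (rule dist_triangle)
      have d1': "dist ((f ^^ a) x) ((f ^^ a) ((f ^^ m) x)) < e3" using d1 by (simp add: dist_commute)
      have d2': "dist ((f ^^ a) ((f ^^ m) x)) ((f ^^ m) x) \<le> e3" using d2 comm by simp
      show "dist ((f ^^ a) x) x \<le> 0 + e" using t1 t2 d1' d2' d3 unfolding e3_def by linarith
    qed
    then have "(f ^^ a) x = x" by simp
    then show False using nper a(1) by blast
  qed
  show ?thesis using part1 part2 by blast
qed

end
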